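(* Let $m\ge 2$ be an integer and let $Y_1,Y_2,\ldots$ be independent, identically distributed random variables with values in $\{0,1,2,\ldots\}$ and common probability function $f(y)=\mathbb{P}(Y_1=y)$, where $f(y)=0$ for $y\notin\{0,1,\ldots,m\}$ and $f(m)>0$. Assume $\mathbb{E}(Y_1)<1$. For an integer $u\ge 0$ consider the Gerber–Dickson risk process $$U(t)=u+t-\sum_{j=1}^{t}Y_j,\qquad t=0,1,2,\ldots,$$ the time of ruin $\tau=\min\{t\ge 1: U(t)\le 0\}$ (with $\min\emptyset=\infty$), and the ultimate ruin probability $\psi(u)=\mathbb{P}(\tau<\infty\mid U(0)=u)$. Define $$\alpha_0=\frac{1-f(1)}{f(0)},\qquad \alpha_k=-\frac{f(k+1)}{f(0)}\quad (k=1,\ldots,m-1).$$ Then: (i) $\psi$ satisfies the linear recurrence $$\psi(u+m+1)=\sum_{k=0}^{m-1}\alpha_k\,\psi(u+m-k)\qquad\text{for all } u\ge 0;$$ (ii) if $z_1,\ldots,z_\ell$ are the distinct (possibly complex) roots of the characteristic polynomial $$p(y)=y^m-\sum_{k=0}^{m-1}\alpha_k\,y^{m-1-k},$$ with multiplicities $n_1,\ldots,n_\ell$ respectively (so $n_1+\cdots+n_\ell=m$), then there exist constants $b_{k,j}\in\mathbb{C}$ ($1\le k\le \ell$, $1\le j\le n_k$) such that $$\psi(u)=\sum_{k=1}^{\ell}\sum_{j=1}^{n_k} b_{k,j}\,u^{j-1}\,z_k^{u}\qquad\text{for all } u\ge 1.$$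
   Context: The net profit condition $\mathbb{E}(Y_1)<1$ implies $f(0)>0$, so the coefficients $\alpha_k$ are well defined. The constants $b_{k,j}$ are those matching the values $\psi(1),\ldots,\psi(m)$. *)

theory Defs
  imports "HOL-Probability.Probability" "HOL-Computational_Algebra.Polynomial"
begin

definition ruin_prob :: "'a measure \<Rightarrow> (nat \<Rightarrow> 'a \<Rightarrow> nat) \<Rightarrow> nat \<Rightarrow> real" where
  "ruin_prob M Y u = measure M {\<omega> \<in> space M.
      \<exists>t::nat. t \<ge> 1 \<and> int u + int t - (\<Sum>j=1..t. int (Y j \<omega>)) \<le> 0}"

definition alpha :: "(nat \<Rightarrow> real) \<Rightarrow> nat \<Rightarrow> real" where
  "alpha f k = (if k = 0 then (1 - f 1) / f 0 else - f (k + 1) / f 0)"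

definition char_poly :: "(nat \<Rightarrow> real) \<Rightarrow> nat \<Rightarrow> complex poly" where
  "char_poly f m = monom 1 m - (\<Sum>k<m. monom (complex_of_real (alpha f k)) (m - 1 - k))"

end

theory Submission
  imports Defs "HOL-Computational_Algebra.Fundamental_Theorem_Algebra"
begin


lemma coeff_lin_pow: "coeff ([:1,1:]^k :: complex poly) i = (if i \<le> k then of_nat (k choose i) else 0)"
proof (cases "i \<le> k")
  case True thus ?thesis by (simp add: coeff_linear_poly_power)
next
  case False thus ?thesis by (simp add: coeff_eq_0 degree_linear_power)
qed

lemma shift_sol_aux:
  fixes r :: complex
  shows "degree P < n \<Longrightarrow> \<exists>R. (\<forall>x. r * poly R (x+1) - poly R x = poly P x) \<and>
            degree R < n + (if r = 1 then 1 else 0)"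
proof (induction n arbitrary: P)
  case 0 thus ?case by simp
next
  case (Suc n)
  define e :: nat where "e = (if r = 1 then 1 else 0)"
  define k where "k = n + e"
  define c where "c = (if r = 1 then coeff P n / of_nat (n+1) else coeff P n / (r - 1))"
  define R0 where "R0 = monom c k"
  define Q0 where "Q0 = smult r (smult c ([:1,1:]^k)) - monom c k"
  have Q0poly: "poly Q0 x = r * poly R0 (x+1) - poly R0 x" for x
    by (simp add: Q0_def R0_def poly_monom add.commute)
  have Q0coeff: "coeff Q0 n = coeff P n"
  proof (cases "r = 1")
    case True
    hence "k = Suc n" by (simp add: k_def e_def)
    have "coeff ([:1,1:]^Suc n :: complex poly) n = of_nat (Suc n)"
      by (simp only: coeff_lin_pow) simp
    moreover have nz: "(1 + complex_of_nat n) \<noteq> 0" by (metis of_nat_Suc of_nat_neq_0)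
    ultimately show ?thesis using True \<open>k = Suc n\<close> by (simp add: Q0_def c_def field_simps del: power_Suc)
  next
    case False
    hence "k = n" by (simp add: k_def e_def)
    hence "coeff Q0 n = (r - 1) * c" by (simp add: Q0_def coeff_lin_pow algebra_simps)
    moreover have "r - 1 \<noteq> 0" using False by simp
    ultimately show ?thesis using False by (simp add: c_def)
  qed
  have Q0deg: "degree Q0 \<le> n"
  proof (rule degree_le, intro allI impI)
    fix i assume "n < i"
    show "coeff Q0 i = 0"
    proof (cases "r = 1")
      case True
      hence "k = Suc n" by (simp add: k_def e_def)
      thus ?thesis using True \<open>n < i\<close> by (auto simp only: Q0_def coeff_lin_pow coeff_diff coeff_smult coeff_monom) simp_all
    next
      case False
      hence "k = n" by (simp add: k_def e_def)
      thus ?thesis using False \<open>n < i\<close> by (auto simp add: Q0_def coeff_lin_pow)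
    qed
  qed
  define P' where "P' = P - Q0"
  have P'deg: "degree P' \<le> n" unfolding P'_def using Suc.prems Q0deg
    by (meson degree_diff_le less_Suc_eq_le)
  have P'c: "coeff P' n = 0" by (simp add: P'_def Q0coeff)
  have R0deg: "degree R0 < Suc n + e" using degree_monom_le[of c k] by (simp add: R0_def k_def)
  show ?case
  proof (cases "P' = 0")
    case True
    hence "poly P x = r * poly R0 (x+1) - poly R0 x" for x by (simp add: P'_def Q0poly)
    hence "\<forall>x. r * poly R0 (x+1) - poly R0 x = poly P x" by simp
    thus ?thesis using R0deg unfolding e_def by blast
  next
    case False
    hence "degree P' < n" using P'deg P'c
      by (metis le_neq_implies_less leading_coeff_0_iff)
    from Suc.IH[OF this] obtain R' where R': "\<forall>x. r * poly R' (x+1) - poly R' x = poly P' x"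
      "degree R' < n + (if r = 1 then 1 else 0)" by blast
    have "\<forall>x. r * poly (R0 + R') (x+1) - poly (R0 + R') x = poly P x"
      using R'(1) Q0poly by (simp add: P'_def algebra_simps)
    moreover have "degree (R0 + R') < Suc n + e"
    proof -
      have "degree R0 \<le> n + e" "degree R' \<le> n + e" using R'(2) R0deg e_def by auto
      hence "degree (R0 + R') \<le> n + e" by (rule degree_add_le)
      thus ?thesis by simp
    qed
    ultimately show ?thesis unfolding e_def by blast
  qed
qed

lemma shift_sol:
  fixes r :: complex
  shows "\<exists>R. (\<forall>x. r * poly R (x+1) - poly R x = poly P x) \<and>
            degree R \<le> degree P + (if r = 1 then 1 else 0) \<and> (P = 0 \<longrightarrow> R = 0)"
proof (cases "P = 0")
  case True thus ?thesis by (intro exI[of _ 0]) simp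
next
  case False
  from shift_sol_aux[of P "Suc (degree P)" r] obtain R where
    "\<forall>x. r * poly R (x+1) - poly R x = poly P x" "degree R < Suc (degree P) + (if r = 1 then 1 else 0)"
    by auto
  thus ?thesis using False by (intro exI[of _ R]) auto
qed

lemma telescope:
  fixes r :: complex
  assumes "\<forall>x. r * poly R (x+1) - poly R x = poly P x"
  shows "(\<Sum>i<n. poly P (of_nat i) * r^i) = poly R (of_nat n) * r^n - poly R 0"
proof (induction n)
  case 0 thus ?case by simp
next
  case (Suc n)
  have "poly P (of_nat n) = r * poly R (of_nat n + 1) - poly R (of_nat n)" using assms by simp
  hence "r^n * poly P (of_nat n) = r^n * (r * poly R (of_nat n + 1) - poly R (of_nat n))"
    by simp
  hence "poly P (of_nat n) * r^n = r^Suc n * poly R (of_nat (Suc n)) - r^n * poly R (of_nat n)"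
    by (simp add: algebra_simps)
  thus ?case using Suc by simp
qed

definition appl :: "complex poly \<Rightarrow> (nat \<Rightarrow> complex) \<Rightarrow> nat \<Rightarrow> complex" where
  "appl p a n = (\<Sum>i\<le>degree p. coeff p i * a (n+i))"

lemma appl_le: "degree p \<le> N \<Longrightarrow> appl p a n = (\<Sum>i\<le>N. coeff p i * a (n+i))"
  unfolding appl_def by (intro sum.mono_neutral_left) (auto simp: coeff_eq_0)

lemma appl_lin: "appl ([:-z,1:] * q) a n = appl q (\<lambda>k. a (Suc k) - z * a k) n"
proof -
  define d where "d = degree q"
  have deg: "degree ([:-z,1:]*q) \<le> Suc d"
    using degree_mult_le[of "[:-z,1:]" q] by (simp add: d_def)
  have c: "coeff ([:-z,1:]*q) i = (if i = 0 then 0 else coeff q (i-1)) - z * coeff q i" for i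
    by (cases i) simp_all
  have "appl ([:-z,1:] * q) a n = (\<Sum>i\<le>Suc d. coeff ([:-z,1:]*q) i * a (n+i))"
    by (rule appl_le[OF deg])
  also have "\<dots> = (\<Sum>i\<le>Suc d. (if i = 0 then 0 else coeff q (i-1)) * a (n+i))
                 - z * (\<Sum>i\<le>Suc d. coeff q i * a (n+i))"
  proof -
    have "(\<Sum>i\<le>Suc d. coeff ([:-z,1:]*q) i * a (n+i)) = (\<Sum>i\<le>Suc d. (if i = 0 then 0 else coeff q (i-1)) * a (n+i) - z * (coeff q i * a (n+i)))"
      unfolding c by (intro sum.cong refl) (simp add: algebra_simps)
    also have "\<dots> = (\<Sum>i\<le>Suc d. (if i = 0 then 0 else coeff q (i-1)) * a (n+i))
                 - z * (\<Sum>i\<le>Suc d. coeff q i * a (n+i))"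
      by (simp only: sum_subtractf sum_distrib_left)
    finally show ?thesis .
  qed
  also have "(\<Sum>i\<le>Suc d. (if i = 0 then 0 else coeff q (i-1)) * a (n+i)) = (\<Sum>i\<le>d. coeff q i * a (Suc (n+i)))"
    by (subst sum.atMost_Suc_shift) simp
  also have "(\<Sum>i\<le>Suc d. coeff q i * a (n+i)) = (\<Sum>i\<le>d. coeff q i * a (n+i))"
    by (simp add: d_def coeff_eq_0)
  finally show ?thesis
    by (simp add: appl_def d_def algebra_simps sum_subtractf sum_distrib_left)
qed

lemma rec_solve:
  "degree p = d \<Longrightarrow> poly p 0 \<noteq> 0 \<Longrightarrow> (\<forall>n. appl p a n = 0) \<Longrightarrow>
   \<exists>P. (\<forall>z. poly p z = 0 \<longrightarrow> degree (P z) < order z p) \<and>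
       (\<forall>n. a n = (\<Sum>z\<in>{z. poly p z = 0}. poly (P z) (of_nat n) * z ^ n))"
proof (induction d arbitrary: p a)
  case 0
  then obtain c where p: "p = [:c:]" by (metis degree_eq_zeroE)
  with 0 have "c \<noteq> 0" by simp
  have "a n = 0" for n using 0(3) \<open>c \<noteq> 0\<close> by (simp add: appl_def p)
  moreover have "{z. poly p z = 0} = {}" using \<open>c \<noteq> 0\<close> by (simp add: p)
  ultimately show ?case by (intro exI[of _ "\<lambda>_. 0"]) simp
next
  case (Suc d)
  have "\<not> constant (poly p)" using Suc.prems(1) by (simp add: constant_degree)
  then obtain z where z: "poly p z = 0" using fundamental_theorem_of_algebra by blast
  then obtain q where pq: "p = [:-z,1:] * q" using poly_eq_0_iff_dvd by (metis dvdE)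
  have p0: "p \<noteq> 0" using Suc.prems(2) by auto
  hence q0: "q \<noteq> 0" using pq by auto
  have "degree ([:-z,1:]*q) = degree [:-z,1:] + degree q" by (rule degree_mult_eq) (simp_all add: q0)
  hence degq: "degree q = d" using Suc.prems(1) pq by simp
  have z0: "z \<noteq> 0" and q00: "poly q 0 \<noteq> 0" using Suc.prems(2) by (auto simp: pq)
  define c where "c = (\<lambda>k. a (Suc k) - z * a k)"
  have "appl q c n = appl p a n" for n by (simp only: pq appl_lin c_def)
  hence "\<forall>n. appl q c n = 0" using Suc.prems(3) by simp
  from Suc.IH[OF degq q00 this] obtain Pq where
    Pq: "\<forall>w. poly q w = 0 \<longrightarrow> degree (Pq w) < order w q"
        "\<forall>n. c n = (\<Sum>w\<in>{w. poly q w = 0}. poly (Pq w) (of_nat n) * w ^ n)" by blast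
  define Rp where "Rp = {w. poly p w = 0}"
  define Rq where "Rq = {w. poly q w = 0}"
  have Rp: "Rp = insert z Rq" by (auto simp: Rp_def Rq_def pq)
  have finRp: "finite Rp" using p0 poly_roots_finite Rp_def by blast
  define Pq' where "Pq' = (\<lambda>w. if w \<in> Rq then Pq w else 0)"
  have c_rep: "c n = (\<Sum>w\<in>Rp. poly (Pq' w) (of_nat n) * w ^ n)" for n
  proof -
    have "c n = (\<Sum>w\<in>Rq. poly (Pq' w) (of_nat n) * w ^ n)"
      using Pq(2) by (simp add: Pq'_def Rq_def)
    also have "\<dots> = (\<Sum>w\<in>Rp. poly (Pq' w) (of_nat n) * w ^ n)"
      by (rule sum.mono_neutral_left) (use finRp in \<open>auto simp: Rp Pq'_def\<close>)
    finally show ?thesis .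
  qed
  have ordp: "order w p = order w q + (if w = z then 1 else 0)" for w
  proof -
    have "order w p = order w [:-z,1:] + order w q" unfolding pq by (rule order_mult) (use p0 pq in simp)
    moreover have "order w [:-z,1:] = (if w = z then 1 else 0)"
      using order_power_n_n[of z 1] order_0I[of "[:-z,1:]" w] by auto
    ultimately show ?thesis by simp
  qed
  have "\<forall>w. \<exists>R. (\<forall>x. (w/z) * poly R (x+1) - poly R x = poly (Pq' w) x) \<and>
            degree R \<le> degree (Pq' w) + (if w/z = 1 then 1 else 0) \<and> (Pq' w = 0 \<longrightarrow> R = 0)"
    by (intro allI shift_sol)
  from choice[OF this] obtain R where
    R0: "\<forall>w. (\<forall>x. (w/z) * poly (R w) (x+1) - poly (R w) x = poly (Pq' w) x) \<and>
            degree (R w) \<le> degree (Pq' w) + (if w/z = 1 then 1 else 0) \<and> (Pq' w = 0 \<longrightarrow> R w = 0)"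
    by blast
  have R: "\<And>w. \<forall>x. (w/z) * poly (R w) (x+1) - poly (R w) x = poly (Pq' w) x"
     "\<And>w. degree (R w) \<le> degree (Pq' w) + (if w/z = 1 then 1 else 0)"
     "\<And>w. Pq' w = 0 \<Longrightarrow> R w = 0" using R0 by blast+
  define K where "K = a 0 - (\<Sum>w\<in>Rp. poly (R w) 0 / z)"
  define P where "P = (\<lambda>w. smult (1/z) (R w) + (if w = z then [:K:] else 0))"
  have a_rep: "a n = z^n * a 0 + (\<Sum>i<n. z^(n-1-i) * c i)" for n
  proof (induction n)
    case 0 thus ?case by simp
  next
    case (Suc n)
    have "a (Suc n) = z * a n + c n" by (simp add: c_def)
    also have "\<dots> = z^Suc n * a 0 + (\<Sum>i<n. z * z^(n-1-i) * c i) + c n"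
      by (simp add: Suc algebra_simps sum_distrib_left)
    also have "(\<Sum>i<n. z * z^(n-1-i) * c i) = (\<Sum>i<n. z^(Suc n-1-i) * c i)"
      by (intro sum.cong refl) (simp add: Suc_diff_Suc power_Suc[symmetric] del: power_Suc)
    finally show ?case by simp
  qed
  have inner: "(\<Sum>i<n. z^(n-1-i) * (poly (Pq' w) (of_nat i) * w^i))
        = poly (smult (1/z) (R w)) (of_nat n) * w^n - z^n * (poly (R w) 0 / z)" for n w
  proof -
    have "(\<Sum>i<n. z^(n-1-i) * (poly (Pq' w) (of_nat i) * w^i))
        = (\<Sum>i<n. (z^n / z) * (poly (Pq' w) (of_nat i) * (w/z)^i))"
    proof (intro sum.cong refl)
      fix i assume "i \<in> {..<n}"
      hence "n = (n-1-i) + Suc i" by simp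
      hence "z^n = z^((n-1-i) + Suc i)" by (rule arg_cong)
      hence "z^n = z^(n-1-i) * z * z^i" by (simp add: power_add)
      thus "z^(n-1-i) * (poly (Pq' w) (of_nat i) * w^i) = (z^n / z) * (poly (Pq' w) (of_nat i) * (w/z)^i)"
        using z0 by (simp add: power_divide field_simps)
    qed
    also have "\<dots> = (z^n / z) * (\<Sum>i<n. poly (Pq' w) (of_nat i) * (w/z)^i)"
      by (simp add: sum_distrib_left)
    also have "\<dots> = (z^n / z) * (poly (R w) (of_nat n) * (w/z)^n - poly (R w) 0)"
      using telescope[OF R(1)] by simp
    also have "\<dots> = poly (smult (1/z) (R w)) (of_nat n) * w^n - z^n * (poly (R w) 0 / z)"
      using z0 by (simp add: power_divide field_simps)
    finally show ?thesis .
  qed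
  have main: "a n = (\<Sum>w\<in>Rp. poly (P w) (of_nat n) * w ^ n)" for n
  proof -
    define X where "X = (\<Sum>w\<in>Rp. poly (smult (1/z) (R w)) (of_nat n) * w^n)"
    define Y where "Y = (\<Sum>w\<in>Rp. poly (R w) 0 / z)"
    have "a n = z^n * a 0 + (\<Sum>i<n. z^(n-1-i) * c i)" by (rule a_rep)
    also have "\<dots> = z^n * a 0 + (\<Sum>i<n. z^(n-1-i) * (\<Sum>w\<in>Rp. poly (Pq' w) (of_nat i) * w ^ i))"
      by (simp only: c_rep)
    also have "(\<Sum>i<n. z^(n-1-i) * (\<Sum>w\<in>Rp. poly (Pq' w) (of_nat i) * w ^ i))
       = (\<Sum>w\<in>Rp. \<Sum>i<n. z^(n-1-i) * (poly (Pq' w) (of_nat i) * w ^ i))"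
      unfolding sum_distrib_left by (rule sum.swap)
    also have "\<dots> = (\<Sum>w\<in>Rp. poly (smult (1/z) (R w)) (of_nat n) * w^n - z^n * (poly (R w) 0 / z))"
      by (rule sum.cong[OF refl], rule inner)
    also have "\<dots> = X - z^n * Y"
      unfolding X_def Y_def by (simp only: sum_subtractf sum_distrib_left)
    finally have an: "a n = z^n * a 0 + (X - z^n * Y)" .
    have "(\<Sum>w\<in>Rp. poly (P w) (of_nat n) * w ^ n)
          = (\<Sum>w\<in>Rp. poly (smult (1/z) (R w)) (of_nat n) * w^n + (if w = z then K * z^n else 0))"
      by (intro sum.cong refl) (simp add: P_def distrib_right)
    also have "\<dots> = X + (\<Sum>w\<in>Rp. (if w = z then K * z^n else 0))"
      unfolding X_def by (rule sum.distrib)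
    also have "(\<Sum>w\<in>Rp. (if w = z then K * z^n else 0)) = K * z^n"
      using finRp Rp by (simp add: sum.delta)
    finally have S: "(\<Sum>w\<in>Rp. poly (P w) (of_nat n) * w ^ n) = X + K * z^n" .
    have KK: "K = a 0 - Y" unfolding K_def Y_def ..
    show ?thesis by (simp only: S an KK) (simp add: algebra_simps)
  qed
  have degs: "degree (P w) < order w p" if "poly p w = 0" for w
  proof -
    have wRp: "w \<in> Rp" using that Rp_def by simp
    have dR: "degree (smult (1/z) (R w)) \<le> degree (R w)" by (rule degree_smult_le)
    show ?thesis
    proof (cases "w = z")
      case False
      hence "w/z \<noteq> 1" using z0 by simp
      hence "degree (R w) \<le> degree (Pq' w)" using R(2)[of w] False by simp
      moreover have "w \<in> Rq" using wRp False Rp by simp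
      ultimately have "degree (R w) < order w q" using Pq(1) by (auto simp add: Pq'_def Rq_def intro: le_less_trans)
      thus ?thesis using False dR by (simp add: P_def ordp)
    next
      case True
      have "degree (R w) < order w q + 1"
      proof (cases "w \<in> Rq")
        case True
        hence "degree (Pq w) < order w q" using Pq(1) by (simp add: Rq_def)
        thus ?thesis using R(2)[of w] True \<open>w = z\<close> z0 by (simp add: Pq'_def)
      next
        case False
        thus ?thesis using R(3)[of w] by (simp add: Pq'_def)
      qed
      moreover have "degree (smult (1/z) (R w) + [:K:]) \<le> max (degree (smult (1/z) (R w))) (degree [:K:])"
        by (rule degree_add_le_max)
      ultimately have "degree (smult (1/z) (R w) + [:K:]) < order w q + 1"
        using dR by simp
      thus ?thesis using True by (simp add: P_def ordp)
    qed
  qed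
  show ?case using main degs Rp_def by blast
qed

lemma poly_sum_ord:
  fixes Q :: "complex poly"
  assumes "degree Q < N"
  shows "poly Q x = (\<Sum>j=1..N. coeff Q (j-1) * x^(j-1))"
proof -
  have "poly Q x = (\<Sum>i\<le>degree Q. coeff Q i * x^i)" by (rule poly_altdef)
  also have "\<dots> = (\<Sum>i<N. coeff Q i * x^i)"
    by (rule sum.mono_neutral_left) (use assms in \<open>auto simp: coeff_eq_0\<close>)
  also have "\<dots> = (\<Sum>j=1..N. coeff Q (j-1) * x^(j-1))"
    using sum_bounds_lt_plus1[of "\<lambda>j. coeff Q (j-1) * x^(j-1)" N] by simp
  finally show ?thesis .
qed

lemma coeff_char_poly:
  "coeff (char_poly f m) i = (if i = m then 1 else 0) - (\<Sum>k<m. if m - 1 - k = i then complex_of_real (alpha f k) else 0)"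
  by (simp add: char_poly_def coeff_sum coeff_monom)

lemma degree_char_poly: "degree (char_poly f m) \<le> m"
  by (rule degree_le) (auto simp: coeff_char_poly intro!: sum.neutral)

lemma char_poly_0:
  assumes "m \<ge> 1"
  shows "poly (char_poly f m) 0 = - complex_of_real (alpha f (m-1))"
proof -
  have "poly (char_poly f m) 0 = coeff (char_poly f m) 0" by (simp add: poly_0_coeff_0)
  also have "\<dots> = - (\<Sum>k<m. if m - 1 - k = 0 then complex_of_real (alpha f k) else 0)"
    using assms by (simp only: coeff_char_poly) simp
  also have "(\<Sum>k<m. if m - 1 - k = 0 then complex_of_real (alpha f k) else 0)
     = (\<Sum>k<m. if k = m - 1 then complex_of_real (alpha f k) else 0)"
    by (intro sum.cong refl) auto
  also have "\<dots> = complex_of_real (alpha f (m-1))"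
  proof -
    have "m - 1 \<in> {..<m}" using assms by simp
    thus ?thesis by (simp only: sum.delta finite_lessThan if_True)
  qed
  finally show ?thesis .
qed

lemma appl_char_poly:
  "appl (char_poly f m) a n = a (n+m) - (\<Sum>k<m. complex_of_real (alpha f k) * a (n+m-1-k))"
proof -
  have "appl (char_poly f m) a n = (\<Sum>i\<le>m. coeff (char_poly f m) i * a (n+i))"
    by (rule appl_le[OF degree_char_poly])
  also have "\<dots> = (\<Sum>i\<le>m. (if i = m then a (n+i) else 0))
      - (\<Sum>i\<le>m. \<Sum>k<m. (if m - 1 - k = i then complex_of_real (alpha f k) * a (n+i) else 0))"
  proof -
    have "coeff (char_poly f m) i * a (n+i) = (if i = m then a (n+i) else 0)
       - (\<Sum>k<m. (if m - 1 - k = i then complex_of_real (alpha f k) * a (n+i) else 0))" for i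
      by (simp only: coeff_char_poly left_diff_distrib sum_distrib_right) (auto intro!: sum.cong)
    thus ?thesis by (simp only: sum_subtractf)
  qed
  also have "(\<Sum>i\<le>m. (if i = m then a (n+i) else 0)) = a (n+m)" by (simp add: sum.delta')
  also have "(\<Sum>i\<le>m. \<Sum>k<m. (if m - 1 - k = i then complex_of_real (alpha f k) * a (n+i) else 0))
      = (\<Sum>k<m. \<Sum>i\<le>m. (if i = m - 1 - k then complex_of_real (alpha f k) * a (n+i) else 0))"
    by (subst sum.swap) (intro sum.cong refl, auto)
  also have "\<dots> = (\<Sum>k<m. complex_of_real (alpha f k) * a (n+m-1-k))"
    by (intro sum.cong refl) (auto simp: sum.delta)
  finally show ?thesis .
qed

lemma part2:
  fixes psi :: "nat \<Rightarrow> real"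
  assumes m: "m \<ge> 1" and am: "alpha f (m-1) \<noteq> 0"
    and rec: "\<forall>u. psi (u + m + 1) = (\<Sum>k<m. alpha f k * psi (u + m - k))"
  shows "\<exists>b :: complex \<Rightarrow> nat \<Rightarrow> complex. \<forall>u::nat. u \<ge> 1 \<longrightarrow>
            complex_of_real (psi u)
              = (\<Sum>z\<in>{z. poly (char_poly f m) z = 0}.
                   \<Sum>j=1..order z (char_poly f m). b z j * of_nat u ^ (j - 1) * z ^ u)"
proof -
  define p where "p = char_poly f m"
  define a where "a = (\<lambda>n. complex_of_real (psi (Suc n)))"
  have p0: "poly p 0 \<noteq> 0" using char_poly_0[OF m, of f] am by (simp add: p_def)
  have "appl p a n = 0" for n
  proof -
    have "appl p a n = a (n+m) - (\<Sum>k<m. complex_of_real (alpha f k) * a (n+m-1-k))"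
      unfolding p_def by (rule appl_char_poly)
    also have "(\<Sum>k<m. complex_of_real (alpha f k) * a (n+m-1-k)) = complex_of_real (\<Sum>k<m. alpha f k * psi (n + m - k))"
      unfolding a_def of_real_sum of_real_mult
      by (intro sum.cong refl) (simp add: Suc_diff_Suc)
    also have "a (n+m) = complex_of_real (psi (n + m + 1))" by (simp add: a_def)
    finally show ?thesis using rec by simp
  qed
  from rec_solve[OF refl p0] this obtain P where
    P: "\<forall>z. poly p z = 0 \<longrightarrow> degree (P z) < order z p"
       "\<forall>n. a n = (\<Sum>z\<in>{z. poly p z = 0}. poly (P z) (of_nat n) * z ^ n)" by blast
  define P' where "P' = (\<lambda>z. smult (1/z) (pcompose (P z) [:-1,1:]))"
  define b where "b = (\<lambda>z j. coeff (P' z) (j-1))"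
  have "\<forall>u::nat. u \<ge> 1 \<longrightarrow> complex_of_real (psi u)
              = (\<Sum>z\<in>{z. poly p z = 0}. \<Sum>j=1..order z p. b z j * of_nat u ^ (j - 1) * z ^ u)"
  proof (intro allI impI)
    fix u :: nat assume "u \<ge> 1"
    obtain n where u: "u = Suc n" using \<open>u \<ge> 1\<close> by (cases u) auto
    have "complex_of_real (psi u) = a n" by (simp add: a_def u)
    also have "\<dots> = (\<Sum>z\<in>{z. poly p z = 0}. poly (P z) (of_nat n) * z ^ n)" using P(2) by simp
    also have "\<dots> = (\<Sum>z\<in>{z. poly p z = 0}. \<Sum>j=1..order z p. b z j * of_nat u ^ (j - 1) * z ^ u)"
    proof (intro sum.cong refl)
      fix z assume "z \<in> {z. poly p z = 0}"
      hence root: "poly p z = 0" by simp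
      hence z0: "z \<noteq> 0" using p0 by auto
      have dP': "degree (P' z) < order z p"
      proof -
        have "degree (P' z) \<le> degree (pcompose (P z) [:-1,1:])" unfolding P'_def by (rule degree_smult_le)
        also have "\<dots> \<le> degree (P z)" using degree_pcompose_le[of "P z" "[:-1,1:]"] by simp
        finally show ?thesis using P(1) root by (meson le_less_trans)
      qed
      have "poly (P z) (of_nat n) * z ^ n = poly (P' z) (of_nat u) * z ^ u"
        using z0 by (simp add: P'_def poly_pcompose u)
      also have "\<dots> = (\<Sum>j=1..order z p. coeff (P' z) (j-1) * of_nat u ^ (j-1)) * z^u"
        by (simp add: poly_sum_ord[OF dP'])
      also have "\<dots> = (\<Sum>j=1..order z p. b z j * of_nat u ^ (j - 1) * z ^ u)"
        by (simp add: b_def sum_distrib_right)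
      finally show "poly (P z) (of_nat n) * z ^ n = (\<Sum>j=1..order z p. b z j * of_nat u ^ (j - 1) * z ^ u)" .
    qed
    finally show "complex_of_real (psi u) = (\<Sum>z\<in>{z. poly p z = 0}. \<Sum>j=1..order z p. b z j * of_nat u ^ (j - 1) * z ^ u)" .
  qed
  thus ?thesis unfolding p_def by blast
qed



fun ruinl :: "nat \<Rightarrow> nat list \<Rightarrow> bool" where
  "ruinl u [] = False"
| "ruinl u (y # ys) = (u + 1 \<le> y \<or> ruinl (u + 1 - y) ys)"

lemma ruin_iff':
  "(\<exists>t. 1 \<le> t \<and> t \<le> T \<and> int u + int t - (\<Sum>i<t. int (W i)) \<le> 0) \<longleftrightarrow> ruinl u (map W [0..<T])"
proof (induction T arbitrary: u W)
  case 0 thus ?case by simp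
next
  case (Suc T)
  have IH: "(\<exists>t. 1 \<le> t \<and> t \<le> T \<and> int (u + 1 - W 0) + int t - (\<Sum>i<t. int (W (Suc i))) \<le> 0)
       \<longleftrightarrow> ruinl (u + 1 - W 0) (map (\<lambda>i. W (Suc i)) [0..<T])" by (rule Suc.IH)
  have sh: "(\<Sum>i<Suc t. int (W i)) = int (W 0) + (\<Sum>i<t. int (W (Suc i)))" for t
    by (rule sum.lessThan_Suc_shift)
  show ?case
  proof (cases "u + 1 \<le> W 0")
    case True
    hence "1 \<le> (1::nat) \<and> 1 \<le> Suc T \<and> int u + int 1 - (\<Sum>i<1. int (W i)) \<le> 0" by simp
    thus ?thesis using True by (auto simp: map_upt_Suc simp del: upt_Suc)
  next
    case False
    hence iu: "int (u + 1 - W 0) = int u + 1 - int (W 0)" by simp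
    have "(\<exists>t. 1 \<le> t \<and> t \<le> Suc T \<and> int u + int t - (\<Sum>i<t. int (W i)) \<le> 0)
        \<longleftrightarrow> (\<exists>t. 1 \<le> t \<and> t \<le> T \<and> int (u + 1 - W 0) + int t - (\<Sum>i<t. int (W (Suc i))) \<le> 0)"
    proof
      assume "\<exists>t. 1 \<le> t \<and> t \<le> Suc T \<and> int u + int t - (\<Sum>i<t. int (W i)) \<le> 0"
      then obtain t where t: "1 \<le> t" "t \<le> Suc T" "int u + int t - (\<Sum>i<t. int (W i)) \<le> 0" by blast
      then obtain t' where t': "t = Suc t'" by (cases t) auto
      show "\<exists>t. 1 \<le> t \<and> t \<le> T \<and> int (u + 1 - W 0) + int t - (\<Sum>i<t. int (W (Suc i))) \<le> 0"
      proof (cases t')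
        case 0
        thus ?thesis using t t' False by simp
      next
        case (Suc t'')
        thus ?thesis using t t' iu sh[of t'] by (intro exI[of _ t']) auto
      qed
    next
      assume "\<exists>t. 1 \<le> t \<and> t \<le> T \<and> int (u + 1 - W 0) + int t - (\<Sum>i<t. int (W (Suc i))) \<le> 0"
      then obtain t where t: "1 \<le> t" "t \<le> T" "int (u + 1 - W 0) + int t - (\<Sum>i<t. int (W (Suc i))) \<le> 0" by blast
      thus "\<exists>t. 1 \<le> t \<and> t \<le> Suc T \<and> int u + int t - (\<Sum>i<t. int (W i)) \<le> 0"
        using iu sh[of t] by (intro exI[of _ "Suc t"]) auto
    qed
    thus ?thesis using IH False by (simp add: map_upt_Suc del: upt_Suc)
  qed
qed

lemma ruin_iff:
  "(\<exists>t. 1 \<le> t \<and> t \<le> T \<and> int u + int t - (\<Sum>j=1..t. int (Z j)) \<le> 0) \<longleftrightarrow> ruinl u (map (\<lambda>i. Z (Suc i)) [0..<T])"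
proof -
  have "(\<Sum>j=1..t. int (Z j)) = (\<Sum>i<t. int (Z (Suc i)))" for t
    by (rule sum_bounds_lt_plus1[symmetric])
  thus ?thesis using ruin_iff'[of T u "\<lambda>i. Z (Suc i)"] by simp
qed

lemma prod_list_nth: "prod_list (map f ys) = (\<Prod>i<length ys. f (ys ! i))"
proof (induction ys)
  case Nil thus ?case by simp
next
  case (Cons a ys)
  have "(\<Prod>i<Suc (length ys). f ((a # ys) ! i)) = f a * (\<Prod>i<length ys. f (ys ! i))"
    by (subst prod.lessThan_Suc_shift) simp
  thus ?case using Cons by simp
qed

definition Ls :: "nat \<Rightarrow> nat \<Rightarrow> nat list set" where
  "Ls m T = {ys. set ys \<subseteq> {..m} \<and> length ys = T}"

lemma finite_Ls: "finite (Ls m T)"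
  unfolding Ls_def by (rule finite_lists_length_eq) simp

lemma sum_Ls_Suc: "(\<Sum>ys\<in>Ls m (Suc T). g ys) = (\<Sum>y\<le>m. \<Sum>ys\<in>Ls m T. g (y # ys))"
proof -
  define h where "h = (\<lambda>p::nat \<times> nat list. fst p # snd p)"
  have "Ls m (Suc T) = h ` ({..m} \<times> Ls m T)"
    unfolding Ls_def h_def by (auto simp: length_Suc_conv image_iff)
  moreover have "inj_on h ({..m} \<times> Ls m T)" by (auto simp: inj_on_def h_def)
  ultimately have "(\<Sum>ys\<in>Ls m (Suc T). g ys) = (\<Sum>p\<in>{..m} \<times> Ls m T. g (h p))"
    by (simp add: sum.reindex)
  also have "\<dots> = (\<Sum>p\<in>{..m} \<times> Ls m T. g (fst p # snd p))" by (simp add: h_def)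
  finally have "(\<Sum>ys\<in>Ls m (Suc T). g ys) = (\<Sum>p\<in>{..m} \<times> Ls m T. g (fst p # snd p))" .
  also have "\<dots> = (\<Sum>y\<le>m. \<Sum>ys\<in>Ls m T. g (y # ys))"
    unfolding sum.cartesian_product by (simp add: case_prod_beta)
  finally show ?thesis .
qed

lemma sum_Ls_prod: fixes f :: "nat \<Rightarrow> real" shows "(\<Sum>ys\<in>Ls m T. prod_list (map f ys)) = (\<Sum>y\<le>m. f y) ^ T"
proof (induction T)
  case 0
  have "Ls m 0 = {[]}" by (auto simp: Ls_def)
  thus ?case by simp
next
  case (Suc T)
  have "(\<Sum>ys\<in>Ls m (Suc T). prod_list (map f ys)) = (\<Sum>y\<le>m. \<Sum>ys\<in>Ls m T. f y * prod_list (map f ys))"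
    by (simp add: sum_Ls_Suc)
  also have "\<dots> = (\<Sum>y\<le>m. f y * (\<Sum>ys\<in>Ls m T. prod_list (map f ys)))"
    by (rule sum.cong[OF refl]) (rule sum_distrib_left[symmetric])
  also have "\<dots> = (\<Sum>y\<le>m. f y) ^ Suc T"
    by (simp add: Suc sum_distrib_right[symmetric])
  finally show ?case .
qed

definition RR :: "(nat \<Rightarrow> real) \<Rightarrow> nat \<Rightarrow> nat \<Rightarrow> nat \<Rightarrow> real" where
  "RR f m T u = (\<Sum>ys\<in>Ls m T. if ruinl u ys then prod_list (map f ys) else 0)"

lemma RR_Suc:
  assumes "(\<Sum>y\<le>m. f y) = 1"
  shows "RR f m (Suc T) u = (\<Sum>y\<le>m. f y * (if u + 1 \<le> y then 1 else RR f m T (u + 1 - y)))"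
proof -
  have "RR f m (Suc T) u = (\<Sum>y\<le>m. \<Sum>ys\<in>Ls m T. if ruinl u (y # ys) then prod_list (map f (y # ys)) else 0)"
    unfolding RR_def by (rule sum_Ls_Suc)
  also have "\<dots> = (\<Sum>y\<le>m. f y * (if u + 1 \<le> y then 1 else RR f m T (u + 1 - y)))"
  proof (intro sum.cong refl)
    fix y
    show "(\<Sum>ys\<in>Ls m T. if ruinl u (y # ys) then prod_list (map f (y # ys)) else 0)
        = f y * (if u + 1 \<le> y then 1 else RR f m T (u + 1 - y))"
    proof (cases "u + 1 \<le> y")
      case True
      have "(\<Sum>ys\<in>Ls m T. f y * prod_list (map f ys)) = f y * (\<Sum>ys\<in>Ls m T. prod_list (map f ys))"
        by (rule sum_distrib_left[symmetric])
      thus ?thesis using True sum_Ls_prod[where m=m and T=T and f=f] assms by simp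
    next
      case False
      thus ?thesis by (simp add: RR_def sum_distrib_left if_distrib cong: if_cong)
    qed
  qed
  finally show ?thesis .
qed

locale ruin_setup = prob_space M for M :: "'a measure" +
  fixes Y :: "nat \<Rightarrow> 'a \<Rightarrow> nat" and f :: "nat \<Rightarrow> real" and m :: nat
  assumes ind: "indep_vars (\<lambda>_. count_space UNIV) Y {1..}"
  and dist: "\<And>j y. j \<ge> 1 \<Longrightarrow> prob {\<omega> \<in> space M. Y j \<omega> = y} = f y"
  and fz: "\<And>y. y > m \<Longrightarrow> f y = 0"
begin

definition Lst :: "nat \<Rightarrow> 'a \<Rightarrow> nat list" where
  "Lst T \<omega> = map (\<lambda>i. Y (Suc i) \<omega>) [0..<T]"

lemma Ymeas: "j \<ge> 1 \<Longrightarrow> Y j \<in> measurable M (count_space UNIV)"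
  using ind unfolding indep_vars_def by auto

lemma Yev: "j \<ge> 1 \<Longrightarrow> {\<omega>\<in>space M. Y j \<omega> = c} \<in> events"
proof -
  assume "j \<ge> 1"
  have "Y j -` {c} \<inter> space M \<in> events" by (rule measurable_sets[OF Ymeas[OF \<open>j \<ge> 1\<close>]]) simp
  moreover have "Y j -` {c} \<inter> space M = {\<omega>\<in>space M. Y j \<omega> = c}" by auto
  ultimately show ?thesis by simp
qed

lemma Vev: "{\<omega>\<in>space M. Lst T \<omega> = ys} \<in> events"
proof (cases "length ys = T")
  case False
  have e: "{\<omega>\<in>space M. Lst T \<omega> = ys} = {}" using False by (auto simp: Lst_def)
  show ?thesis unfolding e by simp
next
  case True
  show ?thesis
  proof (cases "T = 0")
    case True
    hence "{\<omega>\<in>space M. Lst T \<omega> = ys} = space M" using \<open>length ys = T\<close> by (auto simp: Lst_def)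
    thus ?thesis by simp
  next
    case False
    have "{\<omega>\<in>space M. Lst T \<omega> = ys} = {\<omega>\<in>space M. \<forall>i\<in>{..<T}. Y (Suc i) \<omega> = ys ! i}"
      using True by (auto simp: Lst_def list_eq_iff_nth_eq)
    also have "\<dots> \<in> events"
      by (rule sets.sets_Collect_finite_All') (use Yev False in auto)
    finally show ?thesis .
  qed
qed

lemma Vprob: "length ys = T \<Longrightarrow> prob {\<omega>\<in>space M. Lst T \<omega> = ys} = prod_list (map f ys)"
proof -
  assume len: "length ys = T"
  define A where "A = (\<lambda>j. {\<omega>\<in>space M. Y j \<omega> = ys ! (j - 1)})"
  have ie: "indep_events A {1..}"
    unfolding A_def by (rule indep_eventsI_indep_vars[OF ind]) simp
  show ?thesis
  proof (cases "T = 0")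
    case True
    hence "{\<omega>\<in>space M. Lst T \<omega> = ys} = space M" "ys = []" using len by (auto simp: Lst_def)
    thus ?thesis by (simp add: prob_space)
  next
    case False
    have eq: "{\<omega>\<in>space M. Lst T \<omega> = ys} = (\<Inter>j\<in>Suc ` {..<T}. A j)"
      using len False by (auto simp: Lst_def list_eq_iff_nth_eq A_def)
    from ie have I: "\<forall>J\<subseteq>{1..}. J \<noteq> {} \<longrightarrow> finite J \<longrightarrow> prob (\<Inter>j\<in>J. A j) = (\<Prod>j\<in>J. prob (A j))"
      unfolding indep_events_def by blast
    have "prob (\<Inter>j\<in>Suc ` {..<T}. A j) = (\<Prod>j\<in>Suc ` {..<T}. prob (A j))"
      by (rule I[rule_format]) (use False in auto)
    also have "\<dots> = (\<Prod>i<T. prob (A (Suc i)))" by (simp add: prod.reindex)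
    also have "\<dots> = (\<Prod>i<T. f (ys ! i))" by (intro prod.cong refl) (simp add: A_def dist)
    also have "\<dots> = prod_list (map f ys)" by (simp add: prod_list_nth len)
    finally show ?thesis using eq by simp
  qed
qed

lemma Bnull: "{\<omega>\<in>space M. \<exists>i<T. m < Y (Suc i) \<omega>} \<in> null_sets M"
proof -
  have gt: "m < v \<longleftrightarrow> (\<exists>y. v = y + Suc m)" for v :: nat
    by (auto intro: exI[of _ "v - Suc m"])
  have "{\<omega>\<in>space M. \<exists>i<T. m < Y (Suc i) \<omega>} = (\<Union>i\<in>{..<T}. \<Union>y\<in>UNIV. {\<omega>\<in>space M. Y (Suc i) \<omega> = y + Suc m})"
    by (auto simp: gt)
  also have "\<dots> \<in> null_sets M"
  proof (intro null_sets_UN' null_sets_UN)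
    show "countable {..<T}" by simp
  next
    fix i y
    have "{\<omega>\<in>space M. Y (Suc i) \<omega> = y + Suc m} \<in> events" by (rule Yev) simp
    moreover have "prob {\<omega>\<in>space M. Y (Suc i) \<omega> = y + Suc m} = 0" using dist[of "Suc i"] fz by simp
    ultimately show "{\<omega>\<in>space M. Y (Suc i) \<omega> = y + Suc m} \<in> null_sets M"
      by (intro null_setsI) (simp_all add: emeasure_eq_measure)
  qed (rule countableI_type)
  finally show ?thesis .
qed

lemma Qev: "{\<omega>\<in>space M. Q (Lst T \<omega>)} \<in> events"
proof -
  have "{\<omega>\<in>space M. Q (Lst T \<omega>)} = {\<omega>\<in>space M. \<exists>ys\<in>{ys. Q ys}. Lst T \<omega> = ys}" by auto
  also have "\<dots> \<in> events"
    by (rule sets.sets_Collect_countable_Ex') (auto intro: Vev countableI_type)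
  finally show ?thesis .
qed

lemma Lst_Ls: "Lst T \<omega> \<in> Ls m T \<longleftrightarrow> (\<forall>i<T. Y (Suc i) \<omega> \<le> m)"
  by (auto simp: Lst_def Ls_def image_subset_iff)

lemma Gen: "prob {\<omega>\<in>space M. Q (Lst T \<omega>)} = (\<Sum>ys\<in>Ls m T. if Q ys then prod_list (map f ys) else 0)"
proof -
  define A where "A = {\<omega>\<in>space M. Q (Lst T \<omega>)}"
  define B where "B = {\<omega>\<in>space M. \<exists>i<T. m < Y (Suc i) \<omega>}"
  have Aev: "A \<in> events" unfolding A_def by (rule Qev)
  have eq: "A - B = (\<Union>ys\<in>{ys\<in>Ls m T. Q ys}. {\<omega>\<in>space M. Lst T \<omega> = ys})"
  proof
    show "A - B \<subseteq> (\<Union>ys\<in>{ys\<in>Ls m T. Q ys}. {\<omega>\<in>space M. Lst T \<omega> = ys})"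
    proof
      fix \<omega> assume "\<omega> \<in> A - B"
      hence 1: "\<omega> \<in> space M" "Q (Lst T \<omega>)" "\<not> (\<exists>i<T. m < Y (Suc i) \<omega>)"
        by (auto simp: A_def B_def)
      hence "\<forall>i<T. Y (Suc i) \<omega> \<le> m" by (meson leI)
      note 1 this
      thus "\<omega> \<in> (\<Union>ys\<in>{ys\<in>Ls m T. Q ys}. {\<omega>\<in>space M. Lst T \<omega> = ys})"
        using Lst_Ls[of T \<omega>] by blast
    qed
  next
    show "(\<Union>ys\<in>{ys\<in>Ls m T. Q ys}. {\<omega>\<in>space M. Lst T \<omega> = ys}) \<subseteq> A - B"
    proof
      fix \<omega> assume "\<omega> \<in> (\<Union>ys\<in>{ys\<in>Ls m T. Q ys}. {\<omega>\<in>space M. Lst T \<omega> = ys})"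
      hence "\<omega> \<in> space M" "Q (Lst T \<omega>)" "Lst T \<omega> \<in> Ls m T" by auto
      thus "\<omega> \<in> A - B" using Lst_Ls[of T \<omega>] by (auto simp: A_def B_def not_less)
    qed
  qed
  have "prob A = prob (A - B)" using measure_Diff_null_set[OF Aev Bnull[of T]] by (simp add: B_def)
  also have "\<dots> = (\<Sum>ys\<in>{ys\<in>Ls m T. Q ys}. prob {\<omega>\<in>space M. Lst T \<omega> = ys})"
    unfolding eq by (rule finite_measure_finite_Union) (auto simp: finite_Ls disjoint_family_on_def Vev)
  also have "\<dots> = (\<Sum>ys\<in>{ys\<in>Ls m T. Q ys}. prod_list (map f ys))"
    by (intro sum.cong refl) (simp add: Vprob Ls_def)
  also have "\<dots> = (\<Sum>ys\<in>Ls m T. if Q ys then prod_list (map f ys) else 0)"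
    by (simp add: sum.inter_filter finite_Ls)
  finally show ?thesis by (simp add: A_def)
qed

lemma sumf: "(\<Sum>y\<le>m. f y) = 1"
proof -
  have "prob {\<omega>\<in>space M. (\<lambda>_. True) (Lst 1 \<omega>)} = (\<Sum>ys\<in>Ls m 1. prod_list (map f ys))"
    using Gen[of "\<lambda>_. True" 1] by simp
  also have "\<dots> = (\<Sum>y\<le>m. f y)" using sum_Ls_prod[where m=m and T=1 and f=f] by simp
  finally show ?thesis by (simp add: prob_space)
qed

definition Ev :: "nat \<Rightarrow> nat \<Rightarrow> 'a set" where
  "Ev u T = {\<omega>\<in>space M. \<exists>t. 1 \<le> t \<and> t \<le> T \<and> int u + int t - (\<Sum>j=1..t. int (Y j \<omega>)) \<le> 0}"

lemma Ev_eq: "Ev u T = {\<omega>\<in>space M. ruinl u (Lst T \<omega>)}"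
proof -
  have "\<And>\<omega>. (\<exists>t. 1 \<le> t \<and> t \<le> T \<and> int u + int t - (\<Sum>j=1..t. int (Y j \<omega>)) \<le> 0) \<longleftrightarrow> ruinl u (Lst T \<omega>)"
    unfolding Lst_def by (rule ruin_iff)
  thus ?thesis unfolding Ev_def by simp
qed

lemma psi_lim: "(\<lambda>T. RR f m T u) \<longlonglongrightarrow> ruin_prob M Y u"
proof -
  have "range (Ev u) \<subseteq> events" unfolding Ev_eq using Qev by auto
  moreover have "incseq (Ev u)" unfolding incseq_def Ev_def by auto
  ultimately have "(\<lambda>T. prob (Ev u T)) \<longlonglongrightarrow> prob (\<Union>T. Ev u T)"
    by (rule finite_Lim_measure_incseq)
  moreover have "(\<Union>T. Ev u T) = {\<omega> \<in> space M.
      \<exists>t::nat. t \<ge> 1 \<and> int u + int t - (\<Sum>j=1..t. int (Y j \<omega>)) \<le> 0}"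
    unfolding Ev_def by blast
  moreover have "prob (Ev u T) = RR f m T u" for T
    unfolding Ev_eq RR_def by (rule Gen)
  ultimately show ?thesis by (simp add: ruin_prob_def)
qed

lemma psi_rec: "ruin_prob M Y u = (\<Sum>y\<le>m. f y * (if u + 1 \<le> y then 1 else ruin_prob M Y (u + 1 - y)))"
proof -
  have l1: "(\<lambda>T. RR f m (Suc T) u) \<longlonglongrightarrow> ruin_prob M Y u"
    using psi_lim by (rule LIMSEQ_Suc)
  have "(\<lambda>T. (\<Sum>y\<le>m. f y * (if u + 1 \<le> y then 1 else RR f m T (u + 1 - y))))
     \<longlonglongrightarrow> (\<Sum>y\<le>m. f y * (if u + 1 \<le> y then 1 else ruin_prob M Y (u + 1 - y)))"
  proof (intro tendsto_sum)
    fix y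
    show "(\<lambda>T. f y * (if u + 1 \<le> y then 1 else RR f m T (u + 1 - y)))
        \<longlonglongrightarrow> f y * (if u + 1 \<le> y then 1 else ruin_prob M Y (u + 1 - y))"
      by (cases "u + 1 \<le> y") (simp_all add: tendsto_mult_left psi_lim)
  qed
  hence l2: "(\<lambda>T. RR f m (Suc T) u) \<longlonglongrightarrow> (\<Sum>y\<le>m. f y * (if u + 1 \<le> y then 1 else ruin_prob M Y (u + 1 - y)))"
    by (simp add: RR_Suc[OF sumf])
  show ?thesis using LIMSEQ_unique[OF l1 l2] .
qed

lemma f0pos:
  assumes "expectation (\<lambda>\<omega>. real (Y 1 \<omega>)) < 1"
  shows "f 0 > 0"
proof (rule ccontr)
  assume "\<not> f 0 > 0"
  moreover have "f 0 = prob {\<omega>\<in>space M. Y 1 \<omega> = 0}" using dist[of 1 0] by simp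
  moreover have "prob {\<omega>\<in>space M. Y 1 \<omega> = 0} \<ge> 0" by (rule measure_nonneg)
  ultimately have f0: "prob {\<omega>\<in>space M. Y 1 \<omega> = 0} = 0" by linarith
  have ev0: "{\<omega>\<in>space M. Y 1 \<omega> = 0} \<in> events" by (rule Yev) simp
  have N0: "{\<omega>\<in>space M. Y 1 \<omega> = 0} \<in> null_sets M"
    by (rule null_setsI[OF _ ev0]) (simp only: emeasure_eq_measure f0 ennreal_0)
  have ae1: "AE \<omega> in M. 1 \<le> real (Y 1 \<omega>)"
  proof (rule AE_I'[OF N0])
    show "{x \<in> space M. \<not> 1 \<le> real (Y 1 x)} \<subseteq> {\<omega> \<in> space M. Y 1 \<omega> = 0}" by auto
  qed
  have ae2: "AE \<omega> in M. norm (real (Y 1 \<omega>)) \<le> real m"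
  proof (rule AE_I'[OF Bnull[of 1]])
    show "{x \<in> space M. \<not> norm (real (Y 1 x)) \<le> real m} \<subseteq> {\<omega> \<in> space M. \<exists>i<1. m < Y (Suc i) \<omega>}"
      by auto
  qed
  have Y1: "Y 1 \<in> measurable M (count_space UNIV)" by (rule Ymeas) simp
  have r: "real \<in> measurable (count_space UNIV) borel" by simp
  have meas: "(\<lambda>\<omega>. real (Y 1 \<omega>)) \<in> borel_measurable M"
    using measurable_compose[OF Y1 r] by (simp add: comp_def)
  have int: "integrable M (\<lambda>\<omega>. real (Y 1 \<omega>))" by (rule integrable_const_bound[OF ae2 meas])
  have "1 \<le> expectation (\<lambda>\<omega>. real (Y 1 \<omega>))" by (rule integral_ge_const[OF int ae1])
  with assms show False by simp
qed

lemma rec_i: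
  assumes f0: "f 0 \<noteq> 0" and m1: "m \<ge> 1"
  shows "ruin_prob M Y (u + m + 1) = (\<Sum>k<m. alpha f k * ruin_prob M Y (u + m - k))"
proof -
  define \<psi> where "\<psi> = ruin_prob M Y"
  obtain m' where m': "m = Suc m'" using m1 by (cases m) auto
  define w where "w = u + m"
  define S where "S = (\<Sum>i<m'. f (Suc (Suc i)) * \<psi> (u + m' - i))"
  have "\<psi> w = (\<Sum>y\<le>m. f y * \<psi> (w + 1 - y))"
    unfolding \<psi>_def by (subst psi_rec) (intro sum.cong refl, auto simp: w_def)
  also have "\<dots> = f 0 * \<psi> (w + 1) + (\<Sum>i<Suc m'. f (Suc i) * \<psi> (w - i))"
    unfolding m' by (subst sum.atMost_Suc_shift) (simp add: lessThan_Suc_atMost)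
  also have "(\<Sum>i<Suc m'. f (Suc i) * \<psi> (w - i)) = f 1 * \<psi> w + S"
    unfolding S_def by (subst sum.lessThan_Suc_shift) (simp add: w_def m')
  finally have h1: "\<psi> w = f 0 * \<psi> (w + 1) + (f 1 * \<psi> w + S)" .
  have "(\<Sum>k<m. alpha f k * \<psi> (u + m - k)) = alpha f 0 * \<psi> w + (\<Sum>i<m'. alpha f (Suc i) * \<psi> (u + m' - i))"
    unfolding m' by (subst sum.lessThan_Suc_shift) (simp add: w_def m')
  also have "(\<Sum>i<m'. alpha f (Suc i) * \<psi> (u + m' - i)) = - S / f 0"
    unfolding S_def by (simp add: alpha_def sum_divide_distrib sum_negf)
  finally have h2: "(\<Sum>k<m. alpha f k * \<psi> (u + m - k)) = (1 - f 1) / f 0 * \<psi> w - S / f 0"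
    by (simp add: alpha_def)
  have e: "f 0 * \<psi> (w + 1) = (1 - f 1) * \<psi> w - S" using h1 by (simp add: algebra_simps)
  hence "\<psi> (w + 1) = ((1 - f 1) * \<psi> w - S) / f 0" using f0 by (simp add: eq_divide_eq mult.commute)
  also have "((1 - f 1) * \<psi> w - S) / f 0 = (1 - f 1) / f 0 * \<psi> w - S / f 0"
    using f0 by (simp add: field_simps)
  finally have "\<psi> (w + 1) = (1 - f 1) / f 0 * \<psi> w - S / f 0" .
  thus ?thesis using h2 by (simp add: \<psi>_def w_def)
qed

end


theorem theorem1:
  fixes M :: "'a measure" and Y :: "nat \<Rightarrow> 'a \<Rightarrow> nat" and f :: "nat \<Rightarrow> real" and m :: nat
  assumes "prob_space M"
    and "m \<ge> 2"
    and "prob_space.indep_vars M (\<lambda>_. count_space UNIV) Y {1..}"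
    and "\<And>j y. j \<ge> 1 \<Longrightarrow> measure M {\<omega> \<in> space M. Y j \<omega> = y} = f y"
    and "\<And>y. y > m \<Longrightarrow> f y = 0"
    and "f m > 0"
    and "prob_space.expectation M (\<lambda>\<omega>. real (Y 1 \<omega>)) < 1"
  shows "(\<forall>u::nat. ruin_prob M Y (u + m + 1)
            = (\<Sum>k<m. alpha f k * ruin_prob M Y (u + m - k)))
       \<and> (\<exists>b :: complex \<Rightarrow> nat \<Rightarrow> complex. \<forall>u::nat. u \<ge> 1 \<longrightarrow>
            complex_of_real (ruin_prob M Y u)
              = (\<Sum>z\<in>{z. poly (char_poly f m) z = 0}.
                   \<Sum>j=1..order z (char_poly f m). b z j * of_nat u ^ (j - 1) * z ^ u))"
proof -
  interpret R: ruin_setup M Y f m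
  proof (rule ruin_setup.intro[OF assms(1)], rule ruin_setup_axioms.intro)
    show "prob_space.indep_vars M (\<lambda>_. count_space UNIV) Y {1..}" by (rule assms(3))
    show "\<And>j y. j \<ge> 1 \<Longrightarrow> measure M {\<omega> \<in> space M. Y j \<omega> = y} = f y" by (rule assms(4))
    show "\<And>y. y > m \<Longrightarrow> f y = 0" by (rule assms(5))
  qed
  have f0: "f 0 > 0" by (rule R.f0pos) (rule assms(7))
  have m1: "m \<ge> 1" using assms(2) by simp
  have rec: "\<forall>u. ruin_prob M Y (u + m + 1) = (\<Sum>k<m. alpha f k * ruin_prob M Y (u + m - k))"
    using R.rec_i[OF _ m1] f0 by simp
  have "m - 1 \<noteq> 0" using assms(2) by simp
  hence "alpha f (m - 1) = - f m / f 0" using m1 by (simp add: alpha_def)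
  hence am: "alpha f (m - 1) \<noteq> 0" using f0 assms(6) by simp
  show ?thesis using rec part2[OF m1 am rec] by blast
qed

end
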